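(* Let $G$ be an $(N,k)$ Adinkra with associated doubly even code $C$. Then $G$ has Klein flip degeneracy (i.e. the Adinkra obtained from $G$ by exchanging bosons and fermions is not equivalent to $G$) if and only if the all-ones word $(1,1,\dots,1)$ belongs to $C$. This in turn occurs only if $N\equiv 0\pmod 4$.
   Context: An Adinkra of dimension $N$ is a finite connected simple graph $G=(V,E)$ with: a bipartition of $V$ into bosons and fermions (every edge joins a boson and a fermion); a height function $\mathrm{hgt}:V\to\mathbb{Z}$ with adjacent vertices at heights differing by $1$; a coloring of $E$ by colors $\{1,\dots,N\}$ such that each vertex is incident to exactly one edge of each color; an edge parity $\pi:E\to\mathbb{Z}_2$ (parity $1$ = dashed); such that every path with edge colors $(i,j)$, $i\ne j$, lies in a unique 4-cycle with colors $(i,j,i,j)$, each having an odd number of dashed edges. If $|V|=2^{N-k}$, $G$ is an $(N,k)$ Adinkra. Switching a vertex reverses the parity of its incident edges. Two Adinkras are equivalent if there is a bijection between their vertex sets preserving adjacency, edge colors and the boson/fermion bipartition which becomes parity-preserving after switching some set of vertices (heights need not be preserved). A doubly even $(N,k)$ code is a $k$-dimensional subspace of $\mathbb{Z}_2^N$ all of whose elements have Hamming weight $\equiv0\pmod4$. Labeling the vertices of an $N$-cube Adinkra by $\mathbb{Z}_2^N$ so that color-$i$ edges join $v$ and $v+e_i$, every $(N,k)$ Adinkra is equivalent to one obtained by identifying vertices whose labels differ by elements of some doubly even $(N,k)$ code $C$; this $C$ is the associated code. *)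

theory Defs
  imports Main
begin

text \<open>An Adinkra of dimension N: vertex set V, edges E (2-element subsets of V),
  edge colouring col, edge parity par (True = dashed), boson predicate bos,
  height function hgt.\<close>

definition adinkra ::
  "nat \<Rightarrow> 'v set \<Rightarrow> 'v set set \<Rightarrow> ('v set \<Rightarrow> nat) \<Rightarrow> ('v set \<Rightarrow> bool)
     \<Rightarrow> ('v \<Rightarrow> bool) \<Rightarrow> ('v \<Rightarrow> int) \<Rightarrow> bool" where
  "adinkra N V E col par bos hgt \<longleftrightarrow>
     finite V \<and> V \<noteq> {} \<and>
     E \<subseteq> {{u, v} | u v. u \<in> V \<and> v \<in> V \<and> u \<noteq> v} \<and>
     (\<forall>u\<in>V. \<forall>v\<in>V. (\<lambda>a b. {a, b} \<in> E)\<^sup>*\<^sup>* u v) \<and>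
     (\<forall>u v. {u, v} \<in> E \<longrightarrow> bos u \<noteq> bos v) \<and>
     (\<forall>u v. {u, v} \<in> E \<longrightarrow> \<bar>hgt u - hgt v\<bar> = 1) \<and>
     (\<forall>e\<in>E. col e \<in> {1..N}) \<and>
     (\<forall>v\<in>V. \<forall>i\<in>{1..N}. \<exists>!e. e \<in> E \<and> v \<in> e \<and> col e = i) \<and>
     (\<forall>u v w i j. {u, v} \<in> E \<and> {v, w} \<in> E \<and> col {u, v} = i \<and> col {v, w} = j \<and> i \<noteq> j \<longrightarrow>
        (\<exists>!x. {w, x} \<in> E \<and> col {w, x} = i \<and> {x, u} \<in> E \<and> col {x, u} = j) \<and>
        (\<forall>x. {w, x} \<in> E \<and> col {w, x} = i \<and> {x, u} \<in> E \<and> col {x, u} = j \<longrightarrow>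
           odd (length (filter par [{u, v}, {v, w}, {w, x}, {x, u}]))))"

definition NK_adinkra ::
  "nat \<Rightarrow> nat \<Rightarrow> 'v set \<Rightarrow> 'v set set \<Rightarrow> ('v set \<Rightarrow> nat) \<Rightarrow> ('v set \<Rightarrow> bool)
     \<Rightarrow> ('v \<Rightarrow> bool) \<Rightarrow> ('v \<Rightarrow> int) \<Rightarrow> bool" where
  "NK_adinkra N k V E col par bos hgt \<longleftrightarrow>
     adinkra N V E col par bos hgt \<and> k \<le> N \<and> card V = 2 ^ (N - k)"

text \<open>Equivalence of Adinkras (heights ignored): a bijection preserving adjacency,
  colours and the boson/fermion bipartition, which becomes parity preserving after
  switching the vertices of some set W.\<close>
definition adinkra_equiv ::
  "'v set \<Rightarrow> 'v set set \<Rightarrow> ('v set \<Rightarrow> nat) \<Rightarrow> ('v set \<Rightarrow> bool) \<Rightarrow> ('v \<Rightarrow> bool) \<Rightarrow>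
   'w set \<Rightarrow> 'w set set \<Rightarrow> ('w set \<Rightarrow> nat) \<Rightarrow> ('w set \<Rightarrow> bool) \<Rightarrow> ('w \<Rightarrow> bool) \<Rightarrow> bool" where
  "adinkra_equiv V E col par bos V' E' col' par' bos' \<longleftrightarrow>
     (\<exists>f W. bij_betw f V V' \<and> W \<subseteq> V \<and>
        (\<forall>u\<in>V. \<forall>v\<in>V. {u, v} \<in> E \<longleftrightarrow> {f u, f v} \<in> E') \<and>
        (\<forall>u\<in>V. \<forall>v\<in>V. {u, v} \<in> E \<longrightarrow>
            col' {f u, f v} = col {u, v} \<and>
            par' {f u, f v} = (par {u, v} \<noteq> ((u \<in> W) \<noteq> (v \<in> W)))) \<and>
        (\<forall>v\<in>V. bos' (f v) = bos v))"

definition klein_flip_degenerate ::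
  "'v set \<Rightarrow> 'v set set \<Rightarrow> ('v set \<Rightarrow> nat) \<Rightarrow> ('v set \<Rightarrow> bool) \<Rightarrow> ('v \<Rightarrow> bool) \<Rightarrow> bool" where
  "klein_flip_degenerate V E col par bos \<longleftrightarrow>
     \<not> adinkra_equiv V E col par bos V E col par (\<lambda>v. \<not> bos v)"

text \<open>Binary words of length N are identified with subsets of {1..N} (their supports);
  addition in Z_2^N is symmetric difference, Hamming weight is cardinality.\<close>
definition sym_diff :: "nat set \<Rightarrow> nat set \<Rightarrow> nat set" where
  "sym_diff S T = (S - T) \<union> (T - S)"

definition doubly_even_code :: "nat \<Rightarrow> nat \<Rightarrow> nat set set \<Rightarrow> bool" where
  "doubly_even_code N k C \<longleftrightarrow>
     C \<subseteq> Pow {1..N} \<and> {} \<in> C \<and> (\<forall>S\<in>C. \<forall>T\<in>C. sym_diff S T \<in> C) \<and>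
     card C = 2 ^ k \<and> (\<forall>S\<in>C. card S mod 4 = 0)"

text \<open>C is the associated code of G: C is a doubly even (N,k) code and G is equivalent to
  the quotient of the N-cube Adinkra (labels Pow {1..N}, colour-i edges joining S and
  S + e_i, bosons = even weight) by C.  Concretely: a labelling phi of the cube onto V
  identifying exactly the labels differing by a codeword, sending colour-i cube edges to
  colour-i edges of G, and respecting the bipartition.  (The dashing on the quotient is
  not specified by the construction, so it imposes no further constraint.)\<close>
definition associated_code ::
  "nat \<Rightarrow> nat \<Rightarrow> 'v set \<Rightarrow> 'v set set \<Rightarrow> ('v set \<Rightarrow> nat) \<Rightarrow> ('v \<Rightarrow> bool) \<Rightarrow> nat set set \<Rightarrow> bool" where
  "associated_code N k V E col bos C \<longleftrightarrow>
     doubly_even_code N k C \<and>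
     (\<exists>\<phi> :: nat set \<Rightarrow> 'v.
        \<phi> ` Pow {1..N} = V \<and>
        (\<forall>S\<in>Pow {1..N}. \<forall>T\<in>Pow {1..N}. \<phi> S = \<phi> T \<longleftrightarrow> sym_diff S T \<in> C) \<and>
        (\<forall>S\<in>Pow {1..N}. \<forall>i\<in>{1..N}.
            {\<phi> S, \<phi> (sym_diff S {i})} \<in> E \<and> col {\<phi> S, \<phi> (sym_diff S {i})} = i) \<and>
        (\<forall>S\<in>Pow {1..N}. bos (\<phi> S) \<longleftrightarrow> even (card S)))"

end

theory Submission
  imports Defs
begin


lemma sd_assoc: "sym_diff (sym_diff A B) C = sym_diff A (sym_diff B C)"
  unfolding sym_diff_def by auto
lemma sd_comm: "sym_diff A B = sym_diff B A"
  unfolding sym_diff_def by auto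
lemma sd_self[simp]: "sym_diff A A = {}" unfolding sym_diff_def by auto
lemma sd_empty[simp]: "sym_diff A {} = A" "sym_diff {} A = A" unfolding sym_diff_def by auto
lemma sd_cancel[simp]: "sym_diff (sym_diff A B) B = A" "sym_diff A (sym_diff A B) = B"
  unfolding sym_diff_def by auto
lemma sd_flip_comm: "sym_diff (sym_diff S {i}) X = sym_diff (sym_diff S X) {i}"
  unfolding sym_diff_def by auto
lemma sd_sub: "S \<subseteq> U \<Longrightarrow> T \<subseteq> U \<Longrightarrow> sym_diff S T \<subseteq> U"
  unfolding sym_diff_def by auto

lemma card_sd: "finite A \<Longrightarrow> finite B \<Longrightarrow> card (sym_diff A B) + 2 * card (A \<inter> B) = card A + card B"
proof -
  assume f: "finite A" "finite B"
  have e: "sym_diff A B = (A \<union> B) - (A \<inter> B)" unfolding sym_diff_def by auto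
  have "card ((A \<union> B) - (A \<inter> B)) = card (A \<union> B) - card (A \<inter> B)"
    by (rule card_Diff_subset) (simp add: f, blast)
  moreover have "card A + card B = card (A \<union> B) + card (A \<inter> B)" by (rule card_Un_Int[OF f])
  moreover have "card (A \<inter> B) \<le> card (A \<union> B)" by (rule card_mono) (simp add: f, blast)
  ultimately show ?thesis unfolding e by linarith
qed

lemma even_card_sd: "finite A \<Longrightarrow> finite B \<Longrightarrow> even (card (sym_diff A B)) \<longleftrightarrow> even (card A + card B)"
proof -
  assume "finite A" "finite B"
  then have h: "card (sym_diff A B) + 2 * card (A \<inter> B) = card A + card B" by (rule card_sd)
  show ?thesis unfolding h[symmetric] by simp
qed

lemma even_inter_sd: "finite x \<Longrightarrow> even (card (x \<inter> sym_diff A B)) \<longleftrightarrow> even (card (x \<inter> A) + card (x \<inter> B))"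
proof -
  assume "finite x"
  have "x \<inter> sym_diff A B = sym_diff (x \<inter> A) (x \<inter> B)" unfolding sym_diff_def by auto
  thus ?thesis using even_card_sd[of "x \<inter> A" "x \<inter> B"] \<open>finite x\<close> by simp
qed

lemma dual:
  assumes "finite U" "C \<subseteq> Pow U" "{} \<in> C" "\<forall>S\<in>C. \<forall>T\<in>C. sym_diff S T \<in> C" "y \<subseteq> U"
    "\<forall>x\<subseteq>U. (\<forall>c\<in>C. even (card (x \<inter> c))) \<longrightarrow> even (card (x \<inter> y))"
  shows "y \<in> C"
  using assms
proof (induction U arbitrary: C y rule: finite_induct)
  case empty
  then show ?case by auto
next
  case (insert a U)
  show ?case
  proof (cases "\<exists>c0\<in>C. a \<in> c0")
    case True
    then obtain c0 where c0: "c0 \<in> C" "a \<in> c0" by blast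
    define C' where "C' = {c\<in>C. a \<notin> c}"
    define y' where "y' = (if a \<in> y then sym_diff y c0 else y)"
    have c0U: "c0 \<subseteq> insert a U" using c0 insert.prems(1) by auto
    have C'sub: "C' \<subseteq> Pow U" using insert.prems(1) unfolding C'_def by auto
    have C'e: "{} \<in> C'" using insert.prems(2) unfolding C'_def by auto
    have C'cl: "\<forall>S\<in>C'. \<forall>T\<in>C'. sym_diff S T \<in> C'"
    proof (intro ballI)
      fix S T assume "S \<in> C'" "T \<in> C'"
      hence "S \<in> C" "T \<in> C" "a \<notin> S" "a \<notin> T" unfolding C'_def by auto
      moreover have "sym_diff S T \<in> C" using insert.prems(3) calculation by blast
      ultimately show "sym_diff S T \<in> C'" unfolding C'_def sym_diff_def by auto
    qed
    have y'U: "y' \<subseteq> U" using insert.prems(4) c0U c0 unfolding y'_def sym_diff_def by auto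
    have ay': "a \<notin> y'" using y'U insert.hyps by auto
    have hyp': "\<forall>x\<subseteq>U. (\<forall>c\<in>C'. even (card (x \<inter> c))) \<longrightarrow> even (card (x \<inter> y'))"
    proof (intro allI impI)
      fix x assume xU: "x \<subseteq> U" and xo: "\<forall>c\<in>C'. even (card (x \<inter> c))"
      have fx: "finite x" using xU insert.hyps finite_subset by blast
      have ax: "a \<notin> x" using xU insert.hyps by auto
      define xh where "xh = (if even (card (x \<inter> c0)) then x else insert a x)"
      have fxh: "finite xh" using fx unfolding xh_def by auto
      have xhU: "xh \<subseteq> insert a U" using xU unfolding xh_def by auto
      have xhc: "\<And>c. a \<notin> c \<Longrightarrow> xh \<inter> c = x \<inter> c" unfolding xh_def by auto
      have xh0: "even (card (xh \<inter> c0))"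
      proof (cases "even (card (x \<inter> c0))")
        case True then show ?thesis unfolding xh_def by simp
      next
        case False
        have "insert a x \<inter> c0 = insert a (x \<inter> c0)" using c0 by auto
        hence "card (insert a x \<inter> c0) = Suc (card (x \<inter> c0))" using fx ax by simp
        then show ?thesis using False unfolding xh_def by simp
      qed
      have "\<forall>c\<in>C. even (card (xh \<inter> c))"
      proof
        fix c assume cC: "c \<in> C"
        show "even (card (xh \<inter> c))"
        proof (cases "a \<in> c")
          case False
          then show ?thesis using xo cC xhc unfolding C'_def by auto
        next
          case True
          define c' where "c' = sym_diff c c0"
          have "c' \<in> C'" using insert.prems(3) cC c0 True unfolding C'_def c'_def sym_diff_def by auto
          hence e1: "even (card (xh \<inter> c'))" using xo xhc unfolding C'_def by auto
          have "c = sym_diff c' c0" unfolding c'_def by simp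
          then show ?thesis using even_inter_sd[OF fxh, of c' c0] e1 xh0 by simp
        qed
      qed
      hence ey: "even (card (xh \<inter> y))" using insert.prems(5) xhU by blast
      have "even (card (xh \<inter> y'))"
        using ey xh0 even_inter_sd[OF fxh, of y c0] unfolding y'_def by auto
      thus "even (card (x \<inter> y'))" using xhc[OF ay'] by simp
    qed
    have "y' \<in> C'" using insert.IH[OF C'sub C'e C'cl y'U hyp'] .
    hence "y' \<in> C" unfolding C'_def by auto
    show ?thesis
    proof (cases "a \<in> y")
      case True
      hence "y = sym_diff y' c0" unfolding y'_def by simp
      then show ?thesis using \<open>y' \<in> C\<close> c0 insert.prems(3) by auto
    next
      case False
      then show ?thesis using \<open>y' \<in> C\<close> unfolding y'_def by simp
    qed
  next
    case False
    have CU: "C \<subseteq> Pow U" using False insert.prems(1) by auto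
    have "even (card ({a} \<inter> y))"
    proof -
      have "\<forall>c\<in>C. even (card ({a} \<inter> c))" using False by auto
      moreover have "{a} \<subseteq> insert a U" by simp
      ultimately show ?thesis using insert.prems(5) by blast
    qed
    hence "a \<notin> y" by (cases "a \<in> y") auto
    hence yU: "y \<subseteq> U" using insert.prems(4) by auto
    have "\<forall>x\<subseteq>U. (\<forall>c\<in>C. even (card (x \<inter> c))) \<longrightarrow> even (card (x \<inter> y))"
      using insert.prems(5) by blast
    then show ?thesis using insert.IH[OF CU insert.prems(2) insert.prems(3) yU] by blast
  qed
qed




fun endp :: "nat set \<Rightarrow> nat list \<Rightarrow> nat set" where
  "endp S [] = S"
| "endp S (i#L) = endp (sym_diff S {i}) L"

fun psum :: "(nat set \<Rightarrow> nat \<Rightarrow> nat) \<Rightarrow> nat set \<Rightarrow> nat list \<Rightarrow> nat" where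
  "psum D S [] = 0"
| "psum D S (i#L) = D S i + psum D (sym_diff S {i}) L"

definition good :: "nat \<Rightarrow> (nat set \<Rightarrow> nat \<Rightarrow> nat) \<Rightarrow> bool" where
  "good N D \<longleftrightarrow> (\<forall>S\<in>Pow {1..N}. \<forall>i\<in>{1..N}. D (sym_diff S {i}) i = D S i) \<and>
     (\<forall>S\<in>Pow {1..N}. \<forall>i\<in>{1..N}. \<forall>j\<in>{1..N}. i \<noteq> j \<longrightarrow>
        odd (D S i + D (sym_diff S {i}) j + D (sym_diff S {j}) i + D S j))"

lemma endp_distinct: "distinct L \<Longrightarrow> endp S L = sym_diff S (set L)"
  by (induction L arbitrary: S) (auto simp: sym_diff_def)

lemma endp_append: "endp S (L1 @ L2) = endp (endp S L1) L2"
  by (induction L1 arbitrary: S) auto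

lemma psum_append: "psum D S (L1 @ L2) = psum D S L1 + psum D (endp S L1) L2"
  by (induction L1 arbitrary: S) auto

lemma psum_add: "psum (\<lambda>T i. D1 T i + D2 T i) S L = psum D1 S L + psum D2 S L"
  by (induction L arbitrary: S) auto

lemma psum_shift: "psum (\<lambda>T i. D (sym_diff T X) i) S L = psum D (sym_diff S X) L"
  by (induction L arbitrary: S) (auto simp: sd_flip_comm)

lemma flip_sub: "S \<subseteq> {1..N} \<Longrightarrow> i \<in> {1..N} \<Longrightarrow> sym_diff S {i} \<subseteq> {1..(N::nat)}"
  unfolding sym_diff_def by auto

lemma ladder:
  assumes g: "good N D"
  shows "S \<subseteq> {1..N} \<Longrightarrow> set L \<subseteq> {1..N} \<Longrightarrow> i \<in> {1..N} \<Longrightarrow>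
    even (psum D S L + psum D (sym_diff S {i}) L + length (filter (\<lambda>j. j \<noteq> i) L) + D S i + D (endp S L) i)"
proof (induction L arbitrary: S)
  case Nil
  then show ?case by simp
next
  case (Cons j L)
  let ?S' = "sym_diff S {j}"
  have S'sub: "?S' \<subseteq> {1..N}" using Cons.prems flip_sub by auto
  have IH: "even (psum D ?S' L + psum D (sym_diff ?S' {i}) L + length (filter (\<lambda>j. j \<noteq> i) L) + D ?S' i + D (endp ?S' L) i)"
    using Cons S'sub by auto
  have sw: "sym_diff (sym_diff S {i}) {j} = sym_diff ?S' {i}" unfolding sym_diff_def by auto
  have jN: "j \<in> {1..N}" using Cons.prems by auto
  show ?case
  proof (cases "j = i")
    case True
    have a: "D ?S' i = D S i" using g Cons.prems True unfolding good_def by auto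
    have b: "D (sym_diff S {i}) j = D S i" using g Cons.prems True unfolding good_def by auto
    show ?thesis using IH a b True sw by simp presburger
  next
    case False
    have sq: "odd (D S i + D (sym_diff S {i}) j + D ?S' i + D S j)"
      using g Cons.prems jN False unfolding good_def by auto
    show ?thesis using IH sq False sw by simp presburger
  qed
qed

lemma telescope:
  assumes h: "\<forall>T\<in>Pow {1..N}. \<forall>i\<in>{1..N}. even (D1 T i + D2 T i + w T + w (sym_diff T {i}))"
  shows "S \<subseteq> {1..N} \<Longrightarrow> set L \<subseteq> {1..N} \<Longrightarrow>
    even (psum D1 S L + psum D2 S L + w S + w (endp S L))"
proof (induction L arbitrary: S)
  case Nil
  then show ?case by simp
next
  case (Cons j L)
  have S'sub: "sym_diff S {j} \<subseteq> {1..N}" using Cons.prems flip_sub by auto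
  have IH: "even (psum D1 (sym_diff S {j}) L + psum D2 (sym_diff S {j}) L + w (sym_diff S {j}) + w (endp (sym_diff S {j}) L))"
    using Cons S'sub by auto
  have "even (D1 S j + D2 S j + w S + w (sym_diff S {j}))" using h Cons.prems by auto
  then show ?case using IH by simp presburger
qed

lemma good_shift:
  assumes g: "good N D" and X: "X \<subseteq> {1..N}"
  shows "good N (\<lambda>T i. D (sym_diff T X) i)"
proof -
  have sub: "\<And>S. S \<subseteq> {1..N} \<Longrightarrow> sym_diff S X \<subseteq> {1..N}" using X sd_sub by blast
  show ?thesis unfolding good_def
  proof (intro conjI ballI impI)
    fix S i assume S: "S \<in> Pow {1..N}" and i: "i \<in> {1..N}"
    show "D (sym_diff (sym_diff S {i}) X) i = D (sym_diff S X) i"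
      using g sub[of S] S i unfolding good_def sd_flip_comm by auto
  next
    fix S i j assume S: "S \<in> Pow {1..N}" and i: "i \<in> {1..N}" and j: "j \<in> {1..N}" and ij: "i \<noteq> j"
    show "odd (D (sym_diff S X) i + D (sym_diff (sym_diff S {i}) X) j + D (sym_diff (sym_diff S {j}) X) i + D (sym_diff S X) j)"
      using g sub[of S] S i j ij unfolding good_def sd_flip_comm by auto
  qed
qed

lemma Qstep:
  assumes g: "good N D" and DC: "\<forall>S\<in>Pow {1..N}. \<forall>i\<in>{1..N}. D (sym_diff S c) i = D S i"
    and L: "distinct L" "set L = c" and c: "c \<subseteq> {1..N}" "even (card c)"
    and T: "T \<subseteq> {1..N}" and i: "i \<in> {1..N}"
  shows "even (psum D (sym_diff T {i}) L + psum D T L + (if i \<in> c then 1 else 0))"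
proof -
  have l: "even (psum D T L + psum D (sym_diff T {i}) L + length (filter (\<lambda>j. j \<noteq> i) L) + D T i + D (endp T L) i)"
    using ladder[OF g T _ i] L c by auto
  have e: "D (endp T L) i = D T i" using endp_distinct[OF L(1)] L DC T i by auto
  have "length (filter (\<lambda>j. j \<noteq> i) L) = card (set (filter (\<lambda>j. j \<noteq> i) L))"
    by (rule distinct_card[symmetric]) (use L in simp)
  also have "set (filter (\<lambda>j. j \<noteq> i) L) = c - {i}" using L by auto
  finally have len: "length (filter (\<lambda>j. j \<noteq> i) L) = card c - (if i \<in> c then 1 else 0)"
    using c by (simp add: card_Diff_singleton_if)
  have "card c \<ge> (if i \<in> c then 1 else 0)"
    using c finite_subset[OF c(1)] by (auto simp: card_gt_0_iff Suc_le_eq)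
  moreover obtain k where k: "k = (if i \<in> c then 1 else (0::nat))" by blast
  ultimately show ?thesis using l e len c(2) unfolding k[symmetric] by presburger
qed

lemma Qshift:
  assumes g: "good N D" and DC: "\<forall>S\<in>Pow {1..N}. \<forall>i\<in>{1..N}. D (sym_diff S c) i = D S i"
    and L: "distinct L" "set L = c" and c: "c \<subseteq> {1..N}" "even (card c)"
    and S: "S \<subseteq> {1..N}" and Y: "Y \<subseteq> {1..N}"
  shows "even (psum D (sym_diff S Y) L + psum D S L + card (Y \<inter> c))"
proof -
  have fY: "finite Y" using Y finite_subset by blast
  have "Y \<subseteq> {1..N} \<longrightarrow> even (psum D (sym_diff S Y) L + psum D S L + card (Y \<inter> c))"
    using fY
  proof (induction Y rule: finite_induct)
    case empty
    then show ?case by simp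
  next
    case (insert y Y)
    show ?case
    proof
      assume yY: "insert y Y \<subseteq> {1..N}"
      have IH: "even (psum D (sym_diff S Y) L + psum D S L + card (Y \<inter> c))" using insert yY by auto
      have eq: "sym_diff S (insert y Y) = sym_diff (sym_diff S Y) {y}"
        using insert.hyps unfolding sym_diff_def by auto
      have T: "sym_diff S Y \<subseteq> {1..N}" using S yY sd_sub by blast
      have st: "even (psum D (sym_diff (sym_diff S Y) {y}) L + psum D (sym_diff S Y) L + (if y \<in> c then 1 else 0))"
        using Qstep[OF g DC L c T] yY by auto
      have cc: "card (insert y Y \<inter> c) = card (Y \<inter> c) + (if y \<in> c then 1 else 0)"
        using insert.hyps by (auto simp: Int_insert_left)
      show "even (psum D (sym_diff S (insert y Y)) L + psum D S L + card (insert y Y \<inter> c))"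
      proof -
        obtain k where k: "k = (if y \<in> c then 1 else (0::nat))" by blast
        show ?thesis unfolding eq cc k[symmetric] using IH st unfolding k[symmetric] by presburger
      qed
    qed
  qed
  then show ?thesis using Y by blast
qed




locale ctx =
  fixes N :: nat and V :: "'v set" and E :: "'v set set" and col :: "'v set \<Rightarrow> nat"
    and par :: "'v set \<Rightarrow> bool" and bos :: "'v \<Rightarrow> bool" and C :: "nat set set"
    and phi :: "nat set \<Rightarrow> 'v"
  assumes col_range: "\<forall>e\<in>E. col e \<in> {1..N}"
    and col_unique: "\<forall>v\<in>V. \<forall>i\<in>{1..N}. \<exists>!e. e \<in> E \<and> v \<in> e \<and> col e = i"
    and sq: "\<forall>u v w i j. {u, v} \<in> E \<and> {v, w} \<in> E \<and> col {u, v} = i \<and> col {v, w} = j \<and> i \<noteq> j \<longrightarrow>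
        (\<exists>!x. {w, x} \<in> E \<and> col {w, x} = i \<and> {x, u} \<in> E \<and> col {x, u} = j) \<and>
        (\<forall>x. {w, x} \<in> E \<and> col {w, x} = i \<and> {x, u} \<in> E \<and> col {x, u} = j \<longrightarrow>
           odd (length (filter par [{u, v}, {v, w}, {w, x}, {x, u}])))"
    and C_sub: "C \<subseteq> Pow {1..N}" and C_cl: "\<forall>S\<in>C. \<forall>T\<in>C. sym_diff S T \<in> C"
    and C_de: "\<forall>S\<in>C. card S mod 4 = 0" and C_e: "{} \<in> C"
    and phi_img: "phi ` Pow {1..N} = V"
    and phi_eq: "\<forall>S\<in>Pow {1..N}. \<forall>T\<in>Pow {1..N}. phi S = phi T \<longleftrightarrow> sym_diff S T \<in> C"
    and phi_edge: "\<forall>S\<in>Pow {1..N}. \<forall>i\<in>{1..N}.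
            {phi S, phi (sym_diff S {i})} \<in> E \<and> col {phi S, phi (sym_diff S {i})} = i"
    and phi_bos: "\<forall>S\<in>Pow {1..N}. bos (phi S) \<longleftrightarrow> even (card S)"
begin

lemma len4: "length (filter P [a,b,c,d]) = (if P a then 1 else 0) + (if P b then 1 else 0) + (if P c then 1 else (0::nat)) + (if P d then 1 else 0)"
  by simp

definition D :: "nat set \<Rightarrow> nat \<Rightarrow> nat" where
  "D S i = (if par {phi S, phi (sym_diff S {i})} then 1 else 0)"

lemma D_good: "good N D"
  unfolding good_def
proof (intro conjI ballI impI)
  fix S i assume S: "S \<in> Pow {1..N}" and i: "i \<in> {1..N}"
  show "D (sym_diff S {i}) i = D S i" unfolding D_def by (simp add: insert_commute)
next
  fix S i j assume S: "S \<in> Pow {1..N}" and i: "i \<in> {1..N}" and j: "j \<in> {1..N}" and ij: "i \<noteq> j"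
  let ?u = "phi S" and ?v = "phi (sym_diff S {i})" and ?w = "phi (sym_diff (sym_diff S {i}) {j})"
    and ?x = "phi (sym_diff S {j})"
  have Si: "sym_diff S {i} \<in> Pow {1..N}" and Sj: "sym_diff S {j} \<in> Pow {1..N}"
    using S i j flip_sub by auto
  have ww: "sym_diff (sym_diff S {j}) {i} = sym_diff (sym_diff S {i}) {j}"
    unfolding sym_diff_def by auto
  have e1: "{?u, ?v} \<in> E" "col {?u, ?v} = i" using phi_edge S i by auto
  have e2: "{?v, ?w} \<in> E" "col {?v, ?w} = j" using phi_edge Si j by auto
  have e3': "{?x, phi (sym_diff (sym_diff S {j}) {i})} \<in> E \<and> col {?x, phi (sym_diff (sym_diff S {j}) {i})} = i"
    using phi_edge Sj i by blast
  have e3: "{?w, ?x} \<in> E" "col {?w, ?x} = i" using e3' unfolding ww by (auto simp: insert_commute)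
  have e4: "{?x, ?u} \<in> E" "col {?x, ?u} = j" using phi_edge S j by (auto simp: insert_commute)
  have A: "{?u, ?v} \<in> E \<and> {?v, ?w} \<in> E \<and> col {?u, ?v} = i \<and> col {?v, ?w} = j \<and> i \<noteq> j"
    using e1 e2 ij by simp
  have B: "{?w, ?x} \<in> E \<and> col {?w, ?x} = i \<and> {?x, ?u} \<in> E \<and> col {?x, ?u} = j"
    using e3 e4 by simp
  have "odd (length (filter par [{?u, ?v}, {?v, ?w}, {?w, ?x}, {?x, ?u}]))"
    using mp[OF spec[OF conjunct2[OF sq[rule_format, OF A]], of ?x] B] .
  moreover have "{?w, ?x} = {phi (sym_diff S {j}), phi (sym_diff (sym_diff S {j}) {i})}"
    using ww by (auto simp: insert_commute)
  moreover have "{?x, ?u} = {phi S, phi (sym_diff S {j})}" by (auto simp: insert_commute)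
  ultimately show "odd (D S i + D (sym_diff S {i}) j + D (sym_diff S {j}) i + D S j)"
    unfolding D_def len4 by simp
qed

lemma D_C: "c \<in> C \<Longrightarrow> \<forall>S\<in>Pow {1..N}. \<forall>i\<in>{1..N}. D (sym_diff S c) i = D S i"
proof (intro ballI)
  fix S i assume c: "c \<in> C" and S: "S \<in> Pow {1..N}" and i: "i \<in> {1..N}"
  have cs: "c \<subseteq> {1..N}" using c C_sub by auto
  have P1: "sym_diff S c \<in> Pow {1..N}" using S cs sd_sub by auto
  have P2: "sym_diff S {i} \<in> Pow {1..N}" "sym_diff (sym_diff S c) {i} \<in> Pow {1..N}"
    using S P1 i flip_sub by auto
  have "phi (sym_diff S c) = phi S"
    using phi_eq P1 S c by (simp add: sd_comm)
  moreover have "phi (sym_diff (sym_diff S c) {i}) = phi (sym_diff S {i})"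
  proof -
    have "sym_diff (sym_diff (sym_diff S c) {i}) (sym_diff S {i}) = c" unfolding sym_diff_def by auto
    thus ?thesis using phi_eq P2 c by auto
  qed
  ultimately show "D (sym_diff S c) i = D S i" unfolding D_def by simp
qed

lemma uniq_col:
  assumes "a \<in> V" "{a, b} \<in> E" "{a, c} \<in> E" "col {a, b} = col {a, c}"
  shows "b = c"
proof -
  have "col {a, b} \<in> {1..N}" using col_range assms by auto
  then have "{a, b} = {a, c}" using col_unique assms by (metis insertI1)
  then show ?thesis by (metis doubleton_eq_iff)
qed

lemma phi_V: "S \<in> Pow {1..N} \<Longrightarrow> phi S \<in> V" using phi_img by auto

lemma edge_char:
  assumes S: "S \<in> Pow {1..N}"
  shows "{phi S, v} \<in> E \<longleftrightarrow> (\<exists>i\<in>{1..N}. v = phi (sym_diff S {i}))"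
proof
  assume e: "{phi S, v} \<in> E"
  define i where "i = col {phi S, v}"
  have i: "i \<in> {1..N}" using col_range e i_def by auto
  have "v = phi (sym_diff S {i})"
    using uniq_col[OF phi_V[OF S] e] phi_edge S i i_def by auto
  then show "\<exists>i\<in>{1..N}. v = phi (sym_diff S {i})" using i by blast
next
  assume "\<exists>i\<in>{1..N}. v = phi (sym_diff S {i})"
  then show "{phi S, v} \<in> E" using phi_edge S by auto
qed

lemma NC: "even (card c)" if "c \<in> C" for c
proof -
  have "card c mod 4 = 0" using C_de that by blast
  then show ?thesis by presburger
qed

end



context ctx begin

lemma dirB:
  assumes eq: "adinkra_equiv V E col par bos V E col par (\<lambda>v. \<not> bos v)" and full: "{1..N} \<in> C"
  shows False
proof -
  obtain f W where bij: "bij_betw f V V" and WV: "W \<subseteq> V"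
    and adj: "\<forall>u\<in>V. \<forall>v\<in>V. {u, v} \<in> E \<longleftrightarrow> {f u, f v} \<in> E"
    and cp: "\<forall>u\<in>V. \<forall>v\<in>V. {u, v} \<in> E \<longrightarrow> col {f u, f v} = col {u, v} \<and>
              par {f u, f v} = (par {u, v} \<noteq> ((u \<in> W) \<noteq> (v \<in> W)))"
    and bs: "\<forall>v\<in>V. (\<not> bos (f v)) = bos v"
    using eq unfolding adinkra_equiv_def by blast
  have e0: "{} \<in> Pow {1..N}" by simp
  have "f (phi {}) \<in> V" using bij phi_V[OF e0] bij_betwE by blast
  then obtain X where X: "X \<in> Pow {1..N}" "f (phi {}) = phi X" using phi_img by auto
  have fphi: "f (phi S) = phi (sym_diff S X)" if S: "S \<subseteq> {1..N}" for S
  proof -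
    have "finite S" using S finite_subset by blast
    then have "S \<subseteq> {1..N} \<longrightarrow> f (phi S) = phi (sym_diff S X)"
    proof (induction S rule: finite_induct)
      case empty
      then show ?case using X by simp
    next
      case (insert x S)
      show ?case
      proof
        assume xs: "insert x S \<subseteq> {1..N}"
        have Sp: "S \<in> Pow {1..N}" and x: "x \<in> {1..N}" using xs by auto
        have IH: "f (phi S) = phi (sym_diff S X)" using insert xs by auto
        have T: "sym_diff S {x} = insert x S" using insert.hyps unfolding sym_diff_def by auto
        have Tp: "sym_diff S {x} \<in> Pow {1..N}" using T xs by auto
        have ed: "{phi S, phi (sym_diff S {x})} \<in> E" "col {phi S, phi (sym_diff S {x})} = x"
          using phi_edge Sp x by auto
        have ed2: "{f (phi S), f (phi (sym_diff S {x}))} \<in> E"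
          "col {f (phi S), f (phi (sym_diff S {x}))} = x"
          using adj cp ed phi_V[OF Sp] phi_V[OF Tp] by auto
        have SXp: "sym_diff S X \<in> Pow {1..N}" using Sp X sd_sub by auto
        have ed3: "{phi (sym_diff S X), phi (sym_diff (sym_diff S X) {x})} \<in> E"
          "col {phi (sym_diff S X), phi (sym_diff (sym_diff S X) {x})} = x"
          using phi_edge SXp x by auto
        have "f (phi (sym_diff S {x})) = phi (sym_diff (sym_diff S X) {x})"
          using uniq_col[OF phi_V[OF SXp]] ed2 ed3 IH by auto
        then show "f (phi (insert x S)) = phi (sym_diff (insert x S) X)"
          by (metis T sd_flip_comm)
      qed
    qed
    then show ?thesis using S by blast
  qed
  have oX: "odd (card X)"
  proof -
    have "\<not> bos (f (phi {}))" using bs phi_V[OF e0] phi_bos e0 by auto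
    then show ?thesis using X phi_bos by auto
  qed
  define w where "w T = (if phi T \<in> W then 1 else (0::nat))" for T
  define D' where "D' = (\<lambda>T i. D (sym_diff T X) i)"
  have h: "\<forall>T\<in>Pow {1..N}. \<forall>i\<in>{1..N}. even (D' T i + D T i + w T + w (sym_diff T {i}))"
  proof (intro ballI)
    fix T i assume T: "T \<in> Pow {1..N}" and i: "i \<in> {1..N}"
    have T'p: "sym_diff T {i} \<in> Pow {1..N}" using T i flip_sub by auto
    have "{phi T, phi (sym_diff T {i})} \<in> E" using phi_edge T i by auto
    then have p: "par {f (phi T), f (phi (sym_diff T {i}))} =
       (par {phi T, phi (sym_diff T {i})} \<noteq> ((phi T \<in> W) \<noteq> (phi (sym_diff T {i}) \<in> W)))"
      using cp phi_V[OF T] phi_V[OF T'p] by blast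
    have f1: "f (phi (sym_diff T {i})) = phi (sym_diff (sym_diff T X) {i})"
      using fphi T'p by (simp add: sd_flip_comm)
    have f2: "f (phi T) = phi (sym_diff T X)" using fphi T by simp
    show "even (D' T i + D T i + w T + w (sym_diff T {i}))"
      using p unfolding f1 f2 D'_def D_def w_def by auto
  qed
  let ?L = "[1..<N+1]"
  have Ls: "set ?L \<subseteq> {1..N}" "distinct ?L" "set ?L = {1..N}" by auto
  have t: "even (psum D' {} ?L + psum D {} ?L + w {} + w (endp {} ?L))"
    using telescope[OF h, of "{}" ?L] Ls by auto
  have en: "endp {} ?L = {1..N}" using endp_distinct[OF Ls(2)] by auto
  have "phi {1..N} = phi {}" using phi_eq full by auto
  hence we: "w (endp {} ?L) = w {}" using en unfolding w_def by simp
  have ps: "psum D' {} ?L = psum D X ?L" unfolding D'_def psum_shift by simp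
  have q: "even (psum D (sym_diff {} X) ?L + psum D {} ?L + card (X \<inter> {1..N}))"
    using Qshift[OF D_good D_C[OF full] Ls(2) Ls(3) _ NC[OF full], of "{}" X] X by auto
  have "X \<inter> {1..N} = X" using X by auto
  then show False using t we ps q oX by simp
qed

end



context ctx begin

lemma dirA:
  assumes nf: "{1..N} \<notin> C"
  shows "adinkra_equiv V E col par bos V E col par (\<lambda>v. \<not> bos v)"
proof -
  obtain X where X: "X \<subseteq> {1..N}" "\<forall>c\<in>C. even (card (X \<inter> c))" "odd (card X)"
  proof -
    have "\<not> (\<forall>x\<subseteq>{1..N}. (\<forall>c\<in>C. even (card (x \<inter> c))) \<longrightarrow> even (card (x \<inter> {1..N})))"
      using dual[of "{1..N}" C "{1..N}"] C_sub C_e C_cl nf by auto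
    then obtain x where "x \<subseteq> {1..N}" "\<forall>c\<in>C. even (card (x \<inter> c))" "odd (card (x \<inter> {1..N}))"
      by blast
    moreover have "x \<inter> {1..N} = x" using calculation(1) by blast
    ultimately show thesis using that by simp
  qed
  define D' where "D' = (\<lambda>T i. D (sym_diff T X) i)"
  define e where "e = (\<lambda>T i. D' T i + D T i)"
  have gD': "good N D'" unfolding D'_def using good_shift[OF D_good X(1)] .
  define stair where "stair S = filter (\<lambda>m. m \<in> S) [1..<N+1]" for S
  define w where "w S = psum e {} (stair S)" for S
  have pse: "psum e S L = psum D' S L + psum D S L" for S L
    unfolding e_def by (rule psum_add)
  have core: "even (e S i + w S + w (sym_diff S {i}))"
    if S: "S \<subseteq> {1..N}" and i: "i \<in> {1..N}" and iS: "i \<notin> S" for S i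
  proof -
    define A where "A = filter (\<lambda>m. m \<in> S) [1..<i]"
    define B where "B = filter (\<lambda>m. m \<in> S) [Suc i..<N+1]"
    have up: "[1..<N+1] = [1..<i] @ i # [Suc i..<N+1]"
    proof -
      have "[1..<i + (N+1-i)] = [1..<i] @ [i..<i + (N+1-i)]" using i by (intro upt_add_eq_append) auto
      moreover have "i + (N+1-i) = N+1" using i by auto
      moreover have "[i..<N+1] = i # [Suc i..<N+1]" using i by (simp add: upt_conv_Cons)
      ultimately show ?thesis by simp
    qed
    have s1: "stair S = A @ B" using iS unfolding stair_def A_def B_def up by simp
    have ins: "sym_diff S {i} = insert i S" using iS unfolding sym_diff_def by auto
    have fa: "filter (\<lambda>m. m \<in> insert i S) [1..<i] = A" unfolding A_def by (rule filter_cong) auto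
    have fb: "filter (\<lambda>m. m \<in> insert i S) [Suc i..<N+1] = B" unfolding B_def by (rule filter_cong) auto
    have s2: "stair (sym_diff S {i}) = A @ i # B" unfolding ins stair_def up using fa fb by simp
    define SA where "SA = endp {} A"
    have dA: "distinct A" unfolding A_def by simp
    have "SA = set A" using endp_distinct[OF dA] unfolding SA_def by simp
    then have SAs: "SA \<subseteq> {1..N}" unfolding A_def using i by auto
    have dst: "distinct (stair S)" unfolding stair_def by simp
    have eB: "endp SA B = S"
    proof -
      have "endp {} (stair S) = S" using endp_distinct[OF dst] S unfolding stair_def by auto
      then show ?thesis unfolding s1 endp_append SA_def .
    qed
    have Bs: "set B \<subseteq> {1..N}" unfolding B_def by auto
    have l1: "even (psum D' SA B + psum D' (sym_diff SA {i}) B + length (filter (\<lambda>j. j \<noteq> i) B) + D' SA i + D' S i)"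
      using ladder[OF gD' SAs Bs i] eB by simp
    have l2: "even (psum D SA B + psum D (sym_diff SA {i}) B + length (filter (\<lambda>j. j \<noteq> i) B) + D SA i + D S i)"
      using ladder[OF D_good SAs Bs i] eB by simp
    have w1: "w S = psum e {} A + psum e SA B" unfolding w_def s1 psum_append SA_def ..
    have w2: "w (sym_diff S {i}) = psum e {} A + e SA i + psum e (sym_diff SA {i}) B"
      unfolding w_def s2 psum_append SA_def by simp
    show ?thesis unfolding w1 w2 pse using l1 l2 unfolding e_def by presburger
  qed
  have Wprop: "even (e S i + w S + w (sym_diff S {i}))"
    if S: "S \<subseteq> {1..N}" and i: "i \<in> {1..N}" for S i
  proof (cases "i \<in> S")
    case False
    then show ?thesis using core S i by blast
  next
    case True
    define S' where "S' = sym_diff S {i}"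
    have iS': "i \<notin> S'" unfolding S'_def sym_diff_def using True by auto
    have S's: "S' \<subseteq> {1..N}" unfolding S'_def using S i flip_sub by auto
    have bk: "sym_diff S' {i} = S" unfolding S'_def by simp
    have "e S' i = e S i"
      using gD' D_good S i unfolding good_def e_def S'_def by auto
    then show ?thesis using core[OF S's i iS'] unfolding bk by (simp add: S'_def add.commute add.left_commute) blast
  qed
  have h: "\<forall>T\<in>Pow {1..N}. \<forall>i\<in>{1..N}. even (D' T i + D T i + w T + w (sym_diff T {i}))"
    using Wprop unfolding e_def by auto
  have shift_eq: "phi (sym_diff S X) = phi (sym_diff T X) \<longleftrightarrow> phi S = phi T"
    if S: "S \<in> Pow {1..N}" and T: "T \<in> Pow {1..N}" for S T
  proof -
    have "sym_diff (sym_diff S X) (sym_diff T X) = sym_diff S T" unfolding sym_diff_def by auto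
    moreover have "sym_diff S X \<in> Pow {1..N}" "sym_diff T X \<in> Pow {1..N}" using S T X sd_sub by auto
    ultimately show ?thesis using phi_eq S T by simp
  qed
  have wC: "even (w S + w T)" if S: "S \<subseteq> {1..N}" and T: "T \<subseteq> {1..N}" and ph: "phi S = phi T" for S T
  proof -
    define c where "c = sym_diff S T"
    have cC: "c \<in> C" using phi_eq S T ph unfolding c_def by auto
    have cs: "c \<subseteq> {1..N}" using cC C_sub by auto
    have fc: "finite c" using cs finite_subset by blast
    define Lc where "Lc = sorted_list_of_set c"
    have dL: "distinct Lc" and sL: "set Lc = c" unfolding Lc_def using fc by auto
    have t: "even (psum D' S Lc + psum D S Lc + w S + w (endp S Lc))"
      using telescope[OF h S] sL cs by auto
    have en: "endp S Lc = T" unfolding endp_distinct[OF dL] sL c_def by simp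
    have q: "even (psum D (sym_diff S X) Lc + psum D S Lc + card (X \<inter> c))"
      using Qshift[OF D_good D_C[OF cC] dL sL cs NC[OF cC] S X(1)] .
    have ps: "psum D' S Lc = psum D (sym_diff S X) Lc" unfolding D'_def psum_shift ..
    have "even (card (X \<inter> c))" using X cC by auto
    then show ?thesis using t q unfolding en ps by presburger
  qed
  define W where "W = {phi S | S. S \<in> Pow {1..N} \<and> odd (w S)}"
  have Wiff: "phi S \<in> W \<longleftrightarrow> odd (w S)" if S: "S \<in> Pow {1..N}" for S
  proof
    assume "phi S \<in> W"
    then obtain T where T: "T \<in> Pow {1..N}" "odd (w T)" "phi S = phi T" unfolding W_def by auto
    then show "odd (w S)" using wC[of S T] S by auto
  next
    assume "odd (w S)" then show "phi S \<in> W" using S unfolding W_def by auto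
  qed
  define f where "f v = phi (sym_diff (SOME S. S \<in> Pow {1..N} \<and> phi S = v) X)" for v
  have fphi: "f (phi S) = phi (sym_diff S X)" if S: "S \<in> Pow {1..N}" for S
  proof -
    define S0 where "S0 = (SOME S'. S' \<in> Pow {1..N} \<and> phi S' = phi S)"
    have "S0 \<in> Pow {1..N} \<and> phi S0 = phi S" unfolding S0_def by (rule someI[of _ S]) (use S in auto)
    then show ?thesis unfolding f_def S0_def[symmetric] using shift_eq S by auto
  qed
  have oddX: "even (card (sym_diff S X)) \<longleftrightarrow> odd (card S)" if S: "S \<in> Pow {1..N}" for S
  proof -
    have "finite S" "finite X" using finite_subset[OF _ finite_atLeastAtMost[of 1 N]] S X(1) by auto
    then show ?thesis using even_card_sd X(3) by auto
  qed
  have VP: "\<And>u. u \<in> V \<Longrightarrow> \<exists>S\<in>Pow {1..N}. u = phi S" using phi_img by auto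
  show ?thesis unfolding adinkra_equiv_def
  proof (intro exI[of _ f] exI[of _ W] conjI)
    show "bij_betw f V V"
    proof (rule bij_betw_byWitness[where f'=f])
      show "\<forall>a\<in>V. f (f a) = a"
      proof
        fix a assume aV: "a \<in> V"
        obtain S where S: "S \<in> Pow {1..N}" "a = phi S" using VP[OF aV] by blast
        have SX: "sym_diff S X \<in> Pow {1..N}" using S X sd_sub by auto
        show "f (f a) = a" unfolding S(2) fphi[OF S(1)] fphi[OF SX] by simp
      qed
      then show "\<forall>a\<in>V. f (f a) = a" .
      show "f ` V \<subseteq> V"
      proof
        fix b assume "b \<in> f ` V"
        then obtain a where aV: "a \<in> V" and b: "b = f a" by blast
        obtain S where S: "S \<in> Pow {1..N}" "a = phi S" using VP[OF aV] by blast
        have SX: "sym_diff S X \<in> Pow {1..N}" using S X sd_sub by auto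
        show "b \<in> V" unfolding b S(2) fphi[OF S(1)] by (rule phi_V[OF SX])
      qed
      then show "f ` V \<subseteq> V" .
    qed
  next
    show "W \<subseteq> V"
    proof
      fix x assume "x \<in> W"
      then obtain S where "S \<in> Pow {1..N}" "x = phi S" unfolding W_def by blast
      then show "x \<in> V" using phi_V by simp
    qed
  next
    show "\<forall>u\<in>V. \<forall>v\<in>V. {u, v} \<in> E \<longleftrightarrow> {f u, f v} \<in> E"
    proof (intro ballI)
      fix u v assume uV: "u \<in> V" and vV: "v \<in> V"
      obtain S where S: "S \<in> Pow {1..N}" "u = phi S" using VP[OF uV] by blast
      obtain T where T: "T \<in> Pow {1..N}" "v = phi T" using VP[OF vV] by blast
      have SX: "sym_diff S X \<in> Pow {1..N}" using S X sd_sub by auto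
      have "{phi S, phi T} \<in> E \<longleftrightarrow> (\<exists>i\<in>{1..N}. phi T = phi (sym_diff S {i}))" using edge_char[OF S(1)] by simp
      also have "\<dots> \<longleftrightarrow> (\<exists>i\<in>{1..N}. phi (sym_diff T X) = phi (sym_diff (sym_diff S X) {i}))"
      proof -
        have "\<And>i. i \<in> {1..N} \<Longrightarrow> phi T = phi (sym_diff S {i}) \<longleftrightarrow> phi (sym_diff T X) = phi (sym_diff (sym_diff S X) {i})"
        proof -
          fix i assume i: "i \<in> {1..N}"
          have Si: "sym_diff S {i} \<in> Pow {1..N}" using S i flip_sub by auto
          show "phi T = phi (sym_diff S {i}) \<longleftrightarrow> phi (sym_diff T X) = phi (sym_diff (sym_diff S X) {i})"
            using shift_eq[OF T(1) Si] unfolding sd_flip_comm by (simp add: eq_commute)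
        qed
        then show ?thesis by blast
      qed
      also have "\<dots> \<longleftrightarrow> {phi (sym_diff S X), phi (sym_diff T X)} \<in> E" using edge_char[OF SX] by simp
      finally have "{phi S, phi T} \<in> E \<longleftrightarrow> {phi (sym_diff S X), phi (sym_diff T X)} \<in> E" .
      then show "{u, v} \<in> E \<longleftrightarrow> {f u, f v} \<in> E" unfolding S(2) T(2) fphi[OF S(1)] fphi[OF T(1)] .
    qed
  next
    show "\<forall>u\<in>V. \<forall>v\<in>V. {u, v} \<in> E \<longrightarrow> col {f u, f v} = col {u, v} \<and>
              par {f u, f v} = (par {u, v} \<noteq> ((u \<in> W) \<noteq> (v \<in> W)))"
    proof (intro ballI impI)
      fix u v assume "u \<in> V" "v \<in> V" and uv: "{u, v} \<in> E"
      then obtain S where S: "S \<in> Pow {1..N}" "u = phi S"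
        using VP by blast
      have "\<exists>i\<in>{1..N}. v = phi (sym_diff S {i})" using edge_char[OF S(1), of v] uv S(2) by simp
      then obtain i where i: "i \<in> {1..N}" "v = phi (sym_diff S {i})" by blast
      have Si: "sym_diff S {i} \<in> Pow {1..N}" using S i flip_sub by auto
      have SX: "sym_diff S X \<in> Pow {1..N}" using S X sd_sub by auto
      have fu: "f u = phi (sym_diff S X)" using S fphi by simp
      have fv: "f v = phi (sym_diff (sym_diff S X) {i})"
        using fphi[OF Si] i(2) by (metis sd_flip_comm)
      have pe1: "{phi S, phi (sym_diff S {i})} \<in> E \<and> col {phi S, phi (sym_diff S {i})} = i"
        using phi_edge S(1) i(1) by blast
      have pe2: "{phi (sym_diff S X), phi (sym_diff (sym_diff S X) {i})} \<in> E \<and> col {phi (sym_diff S X), phi (sym_diff (sym_diff S X) {i})} = i"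
        using phi_edge SX i(1) by blast
      have c1: "col {u, v} = i" using pe1 S(2) i(2) by simp
      have c2: "col {f u, f v} = i" using pe2 fu fv by simp
      have wp: "even (D' S i + D S i + w S + w (sym_diff S {i}))" using h S(1) i(1) by blast
      have W1: "u \<in> W \<longleftrightarrow> odd (w S)" using Wiff[OF S(1)] S(2) by simp
      have W2: "v \<in> W \<longleftrightarrow> odd (w (sym_diff S {i}))" using Wiff[OF Si] i(2) by simp
      have "par {f u, f v} = (par {u, v} \<noteq> ((u \<in> W) \<noteq> (v \<in> W)))"
        using wp unfolding W1 W2 fu fv unfolding S(2) i(2) D'_def D_def by (simp split: if_splits; blast)
      then show "col {f u, f v} = col {u, v} \<and> par {f u, f v} = (par {u, v} \<noteq> ((u \<in> W) \<noteq> (v \<in> W)))"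
        using c1 c2 by simp
    qed
  next
    show "\<forall>v\<in>V. (\<not> bos (f v)) = bos v"
    proof
      fix v assume "v \<in> V"
      then obtain S where S: "S \<in> Pow {1..N}" "v = phi S" using VP by blast
      have SX: "sym_diff S X \<in> Pow {1..N}" using S X sd_sub by auto
      have b1: "bos (f v) \<longleftrightarrow> even (card (sym_diff S X))" using fphi[OF S(1)] phi_bos SX S(2) by simp
      have b2: "bos v \<longleftrightarrow> even (card S)" using phi_bos S by simp
      show "(\<not> bos (f v)) = bos v" using b1 b2 oddX[OF S(1)] by simp
    qed
  qed
qed

end



theorem mainTheorem7:
  fixes N k :: nat and V :: "'v set" and E :: "'v set set"
    and col :: "'v set \<Rightarrow> nat" and par :: "'v set \<Rightarrow> bool"
    and bos :: "'v \<Rightarrow> bool" and hgt :: "'v \<Rightarrow> int" and C :: "nat set set"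
  assumes "NK_adinkra N k V E col par bos hgt"
    and "associated_code N k V E col bos C"
  shows "(klein_flip_degenerate V E col par bos \<longleftrightarrow> {1..N} \<in> C)
         \<and> ({1..N} \<in> C \<longrightarrow> N mod 4 = 0)"
proof -
  have ad: "adinkra N V E col par bos hgt" using assms(1) unfolding NK_adinkra_def by blast
  have a1: "\<forall>e\<in>E. col e \<in> {1..N}" using ad unfolding adinkra_def by (elim conjE) assumption
  have a2: "\<forall>v\<in>V. \<forall>i\<in>{1..N}. \<exists>!e. e \<in> E \<and> v \<in> e \<and> col e = i" using ad unfolding adinkra_def by (elim conjE) assumption
  have a3: "\<forall>u v w i j. {u, v} \<in> E \<and> {v, w} \<in> E \<and> col {u, v} = i \<and> col {v, w} = j \<and> i \<noteq> j \<longrightarrow>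
        (\<exists>!x. {w, x} \<in> E \<and> col {w, x} = i \<and> {x, u} \<in> E \<and> col {x, u} = j) \<and>
        (\<forall>x. {w, x} \<in> E \<and> col {w, x} = i \<and> {x, u} \<in> E \<and> col {x, u} = j \<longrightarrow>
           odd (length (filter par [{u, v}, {v, w}, {w, x}, {x, u}])))"
    using ad unfolding adinkra_def by (elim conjE) assumption
  have dc: "doubly_even_code N k C" using assms(2) unfolding associated_code_def by blast
  obtain phi :: "nat set \<Rightarrow> 'v" where
    p1: "phi ` Pow {1..N} = V" and
    p2: "\<forall>S\<in>Pow {1..N}. \<forall>T\<in>Pow {1..N}. phi S = phi T \<longleftrightarrow> sym_diff S T \<in> C" and
    p3: "\<forall>S\<in>Pow {1..N}. \<forall>i\<in>{1..N}.
            {phi S, phi (sym_diff S {i})} \<in> E \<and> col {phi S, phi (sym_diff S {i})} = i" and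
    p4: "\<forall>S\<in>Pow {1..N}. bos (phi S) \<longleftrightarrow> even (card S)"
    using assms(2) unfolding associated_code_def by (elim conjE exE) (rule that; assumption)
  have c1: "C \<subseteq> Pow {1..N}" and c2: "{} \<in> C" and c3: "\<forall>S\<in>C. \<forall>T\<in>C. sym_diff S T \<in> C"
    and c4: "\<forall>S\<in>C. card S mod 4 = 0"
    using dc unfolding doubly_even_code_def by blast+
  interpret ctx N V E col par bos C phi
    by (unfold_locales) (fact a1 a2 a3 c1 c3 c4 c2 p1 p2 p3 p4)+
  have part1: "klein_flip_degenerate V E col par bos \<longleftrightarrow> {1..N} \<in> C"
    unfolding klein_flip_degenerate_def using dirA dirB by blast
  have part2: "{1..N} \<in> C \<longrightarrow> N mod 4 = 0"
  proof
    assume "{1..N} \<in> C"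
    then have "card {1..N} mod 4 = 0" using c4 by blast
    then show "N mod 4 = 0" by simp
  qed
  show ?thesis using part1 part2 by blast
qed


end
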